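(* Let $n\ge1$, $e=i_n$, and $x=(\bar x,x_n),\,y=(\bar y,y_n)\in Q_n$ with $\bar x,\bar y\in Q_{n-1}$, $x_n,y_n\in\{0,1\}$. Then for every $z\in Q_{n-1}$ (viewed in $Q_n$) we have $[y,x,ze]=[\bar x,\bar y]\,[y,x,z]$; equivalently, if $L_{x,y}(z)=\varepsilon z$ with $\varepsilon\in\{\pm1\}$, then $L_{x,y}(ze)=[\bar x,\bar y]\,\varepsilon\, ze$. Moreover $L_{x,e}=L_{xe,e}$ for all $x\in Q_n$.
   Context: Cayley--Dickson loops: $Q_0=\{1,-1\}\subset\mathbb{R}$ with conjugation $x^*=x$. For $n\ge1$, $Q_n=\{(x,0),(x,1)\mid x\in Q_{n-1}\}$ with multiplication $(x,0)(y,0)=(xy,0)$, $(x,0)(y,1)=(yx,1)$, $(x,1)(y,0)=(xy^*,1)$, $(x,1)(y,1)=(-y^*x,0)$ and conjugation $(x,0)^*=(x^*,0)$, $(x,1)^*=(-x,1)$, where $-(x,a)=(-x,a)$. $Q_n$ is a loop with neutral element $1=(1,0,\dots,0)$. $Q_{n-1}$ is identified with $\{(x,0)\}\subset Q_n$; $e=i_n=(1_{Q_{n-1}},1)$. Commutator $[x,y]$ defined by $xy=(yx)[x,y]$ and associator by $(xy)z=(x(yz))[x,y,z]$, both in $\{\pm1\}$. $L_x(a)=xa$, $L_{x,y}=L_{yx}^{-1}L_yL_x$; one has $L_{x,y}(z)=[y,x,z]z$. *)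

theory Defs
  imports Main
begin

text \<open>An element of Q_n is encoded as a pair (s, bs) with
  s a sign in {1,-1} and bs a bit list of length n; the head of bs is the
  outermost (last added) coordinate. Thus (x,a) in Q_n with x = (s,bs) in Q_(n-1)
  is (s, a # bs), and x in Q_(n-1) is identified with (x,0) = (s, False # bs).\<close>

type_synonym cd = "int \<times> bool list"

definition cdQ :: "nat \<Rightarrow> cd set" where
  "cdQ n = {(s, bs). (s = 1 \<or> s = -1) \<and> length bs = n}"

definition cdpair :: "cd \<Rightarrow> bool \<Rightarrow> cd" where
  "cdpair x a = (fst x, a # snd x)"

definition cdneg :: "cd \<Rightarrow> cd" where
  "cdneg x = (- fst x, snd x)"

definition cdsc :: "int \<Rightarrow> cd \<Rightarrow> cd" where
  "cdsc c x = (c * fst x, snd x)"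

fun cdconj :: "cd \<Rightarrow> cd" where
  "cdconj (s, []) = (s, [])"
| "cdconj (s, False # bs) = cdpair (cdconj (s, bs)) False"
| "cdconj (s, True # bs) = cdpair (cdneg (s, bs)) True"

fun cdmult :: "nat \<Rightarrow> cd \<Rightarrow> cd \<Rightarrow> cd" where
  "cdmult 0 x y = (fst x * fst y, [])"
| "cdmult (Suc n) x y =
     (let xb = (fst x, tl (snd x)); yb = (fst y, tl (snd y));
          a = hd (snd x); b = hd (snd y)
      in if \<not> a \<and> \<not> b then cdpair (cdmult n xb yb) False
         else if \<not> a \<and> b then cdpair (cdmult n yb xb) True
         else if a \<and> \<not> b then cdpair (cdmult n xb (cdconj yb)) True
         else cdpair (cdneg (cdmult n (cdconj yb) xb)) False)"

definition cdone :: "nat \<Rightarrow> cd" where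
  "cdone n = (1, replicate n False)"

definition cdi :: "nat \<Rightarrow> cd" where
  "cdi n = cdpair (cdone (n - 1)) True"

definition cdcomm :: "nat \<Rightarrow> cd \<Rightarrow> cd \<Rightarrow> int" where
  "cdcomm n x y = (THE c. (c = 1 \<or> c = -1) \<and> cdmult n x y = cdsc c (cdmult n y x))"

definition cdassoc :: "nat \<Rightarrow> cd \<Rightarrow> cd \<Rightarrow> cd \<Rightarrow> int" where
  "cdassoc n x y z = (THE c. (c = 1 \<or> c = -1) \<and>
     cdmult n (cdmult n x y) z = cdsc c (cdmult n x (cdmult n y z)))"

definition cdL :: "nat \<Rightarrow> cd \<Rightarrow> cd \<Rightarrow> cd" where
  "cdL n x = (\<lambda>a. cdmult n x a)"

definition cdLL :: "nat \<Rightarrow> cd \<Rightarrow> cd \<Rightarrow> cd \<Rightarrow> cd" where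
  "cdLL n x y = inv_into (cdQ n) (cdL n (cdmult n y x)) \<circ> cdL n y \<circ> cdL n x"

end

theory Submission
  imports Defs
begin

fun xl :: "bool list \<Rightarrow> bool list \<Rightarrow> bool list" where
  "xl (a#as) (b#bs) = (a \<noteq> b) # xl as bs"
| "xl _ _ = []"

definition kk :: "bool list \<Rightarrow> int" where
  "kk bs = (if True \<in> set bs then -1 else 1)"

function S :: "bool list \<Rightarrow> bool list \<Rightarrow> int" where
  "S (a#as) (b#bs) = (if \<not>a \<and> \<not>b then S as bs else if \<not>a \<and> b then S bs as
      else if a \<and> \<not>b then kk bs * S as bs else - kk bs * S bs as)"
| "S [] _ = 1"
| "S (a#as) [] = 1"
  by pat_completeness auto
termination by (relation "measure (\<lambda>(x,y). length x + length y)") auto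

definition A :: "bool list \<Rightarrow> bool list \<Rightarrow> bool list \<Rightarrow> int" where
  "A a b c = S a b * S (xl a b) c * S b c * S a (xl b c)"

lemma length_xl[simp]: "length (xl a b) = min (length a) (length b)"
  by (induction a b rule: xl.induct) auto

lemma xl_comm: "xl a b = xl b a"
  by (induction a b rule: xl.induct) auto

lemma xl_assoc: "xl (xl a b) c = xl a (xl b c)"
proof (induction a arbitrary: b c)
  case Nil then show ?case by simp
next
  case (Cons x xs) then show ?case by (cases b; cases c) auto
qed

lemma xl_cancel: "length a = length b \<Longrightarrow> xl a (xl a b) = b"
proof (induction a arbitrary: b)
  case Nil then show ?case by simp
next
  case (Cons x xs) then show ?case by (cases b) auto
qed

lemma xl_zero_r: "xl c (replicate (length c) False) = c"
  by (induction c) auto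

lemma xl_zero_l: "xl (replicate (length c) False) c = c"
  by (induction c) auto

lemma kk_pm: "kk x = 1 \<or> kk x = -1" by (simp add: kk_def)
lemma kk_sq: "kk x * kk x = 1" by (simp add: kk_def)
lemma kk_T[simp]: "kk (True#d) = -1" by (simp add: kk_def)
lemma kk_F[simp]: "kk (False#d) = kk d" by (simp add: kk_def)
lemma kk_zero[simp]: "kk (replicate m False) = 1" by (simp add: kk_def)

lemma S_pm: "S a b = 1 \<or> S a b = -1"
  by (induction a b rule: S.induct) (auto simp: kk_def)
lemma S_sq: "S a b * S a b = 1" using S_pm[of a b] by auto
lemma S_nz: "S a b \<noteq> 0" using S_pm[of a b] by auto

lemma S_zero_r: "S d (replicate (length d) False) = 1"
  by (induction d) auto
lemma S_zero_l: "S (replicate (length d) False) d = 1"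
  by (induction d) (auto simp: S_zero_r)

lemma conj_eq: "cdconj (s,bs) = (s * kk bs, bs)"
proof (induction bs arbitrary: s)
  case Nil then show ?case by (simp add: kk_def)
next
  case (Cons a bs) then show ?case
    by (cases a) (auto simp: cdpair_def cdneg_def)
qed

lemma mult_eq: "length as = m \<Longrightarrow> length bs = m \<Longrightarrow>
   cdmult m (s,as) (t,bs) = (s*t*S as bs, xl as bs)"
proof (induction m arbitrary: s t as bs)
  case 0 then show ?case by simp
next
  case (Suc m)
  then obtain a as' b bs' where e: "as = a#as'" "bs = b#bs'" "length as' = m" "length bs' = m"
    by (metis length_Suc_conv)
  have c: "xl bs' as' = xl as' bs'" by (rule xl_comm)
  show ?case using Suc.IH e
    by (cases a; cases b) (auto simp: Let_def cdpair_def cdneg_def conj_eq c algebra_simps)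
qed

lemma mem_cdQ: "(s,bs) \<in> cdQ n \<longleftrightarrow> (s = 1 \<or> s = -1) \<and> length bs = n"
  by (simp add: cdQ_def)

lemma assoc_eq:
  assumes "length as = m" "length bs = m" "length cs = m" "s \<noteq> 0" "t \<noteq> 0" "u \<noteq> 0"
  shows "cdassoc m (s,as) (t,bs) (u,cs) = A as bs cs"
proof -
  have L: "cdmult m (cdmult m (s,as) (t,bs)) (u,cs) = (s*t*S as bs*u*S (xl as bs) cs, xl (xl as bs) cs)"
    using assms by (simp add: mult_eq)
  have R: "cdmult m (s,as) (cdmult m (t,bs) (u,cs)) = (s*(t*u*S bs cs)*S as (xl bs cs), xl as (xl bs cs))"
    using assms by (simp add: mult_eq)
  have nz: "s*(t*u*S bs cs)*S as (xl bs cs) \<noteq> 0" using assms S_nz by simp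
  have Apm: "A as bs cs = 1 \<or> A as bs cs = -1" unfolding A_def
    using S_pm[of as bs] S_pm[of "xl as bs" cs] S_pm[of bs cs] S_pm[of as "xl bs cs"] by auto
  have eq: "s*t*S as bs*u*S (xl as bs) cs = A as bs cs * (s*(t*u*S bs cs)*S as (xl bs cs))"
  proof -
    have "A as bs cs * (s*(t*u*S bs cs)*S as (xl bs cs))
       = s*t*S as bs*u*S (xl as bs) cs * (S bs cs * S bs cs) * (S as (xl bs cs) * S as (xl bs cs))"
      by (simp add: A_def mult_ac)
    also have "\<dots> = s*t*S as bs*u*S (xl as bs) cs" by (simp only: S_sq mult_1_right)
    finally show ?thesis by (rule sym)
  qed
  show ?thesis unfolding cdassoc_def
  proof (rule the_equality)
    show "(A as bs cs = 1 \<or> A as bs cs = -1) \<and> cdmult m (cdmult m (s, as) (t, bs)) (u, cs) =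
      cdsc (A as bs cs) (cdmult m (s, as) (cdmult m (t, bs) (u, cs)))"
      using Apm unfolding L R cdsc_def eq by (simp add: xl_assoc)
  next
    fix c assume "(c = 1 \<or> c = -1) \<and> cdmult m (cdmult m (s, as) (t, bs)) (u, cs) =
      cdsc c (cdmult m (s, as) (cdmult m (t, bs) (u, cs)))"
    then have "fst (cdmult m (cdmult m (s, as) (t, bs)) (u, cs)) = c * fst (cdmult m (s, as) (cdmult m (t, bs) (u, cs)))"
      by (simp add: cdsc_def)
    then have "A as bs cs * (s*(t*u*S bs cs)*S as (xl bs cs)) = c * (s*(t*u*S bs cs)*S as (xl bs cs))"
      unfolding L R fst_conv eq .
    then show "c = A as bs cs" using nz by simp
  qed
qed

lemma comm_eq:
  assumes "length as = m" "length bs = m" "s \<noteq> 0" "t \<noteq> 0"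
  shows "cdcomm m (s,as) (t,bs) = S as bs * S bs as"
  unfolding cdcomm_def
proof (rule the_equality)
  have "s*t*S as bs = (S as bs * S bs as) * (t*s*S bs as)"
  proof -
    have "(S as bs * S bs as) * (t*s*S bs as) = s*t*S as bs * (S bs as * S bs as)" by (simp add: mult_ac)
    also have "\<dots> = s*t*S as bs" by (simp only: S_sq mult_1_right)
    finally show ?thesis by (rule sym)
  qed
  then show "(S as bs * S bs as = 1 \<or> S as bs * S bs as = -1) \<and>
     cdmult m (s, as) (t, bs) = cdsc (S as bs * S bs as) (cdmult m (t, bs) (s, as))"
    using assms S_pm[of as bs] S_pm[of bs as] by (auto simp: mult_eq cdsc_def xl_comm)
next
  fix c assume "(c = 1 \<or> c = -1) \<and> cdmult m (s, as) (t, bs) = cdsc c (cdmult m (t, bs) (s, as))"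
  then have h: "s*t*S as bs = c * (t*s*S bs as)" using assms by (simp add: mult_eq cdsc_def)
  have "(s*t) * S as bs = (s*t) * (c * S bs as)" using h by (simp add: mult_ac)
  hence "S as bs = c * S bs as" using assms by simp
  then have "S as bs * S bs as = c * (S bs as * S bs as)" by simp
  then show "c = S as bs * S bs as" by (simp add: S_sq)
qed

lemma LL_eq:
  assumes "x \<in> cdQ m" "y \<in> cdQ m" "z \<in> cdQ m"
  shows "cdLL m x y z = cdsc (cdassoc m y x z) z"
proof -
  obtain s as where x: "x = (s,as)" "s = 1 \<or> s = -1" "length as = m" using assms(1)
    by (cases x) (auto simp: mem_cdQ)
  obtain t bs where y: "y = (t,bs)" "t = 1 \<or> t = -1" "length bs = m" using assms(2)
    by (cases y) (auto simp: mem_cdQ)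
  obtain u cs where z: "z = (u,cs)" "u = 1 \<or> u = -1" "length cs = m" using assms(3)
    by (cases z) (auto simp: mem_cdQ)
  have snz: "s \<noteq> 0" "t \<noteq> 0" "u \<noteq> 0" using x y z by auto
  define c where "c = A bs as cs"
  have ac: "cdassoc m y x z = c" using x y z snz by (simp add: assoc_eq c_def)
  have cpm: "c = 1 \<or> c = -1" unfolding c_def A_def
    using S_pm[of bs as] S_pm[of "xl bs as" cs] S_pm[of as cs] S_pm[of bs "xl as cs"] by auto
  have yx: "cdmult m y x = (t*s*S bs as, xl bs as)" using x y by (simp add: mult_eq)
  have inj: "inj_on (cdL m (cdmult m y x)) (cdQ m)"
  proof (rule inj_onI)
    fix p q assume p: "p \<in> cdQ m" and q: "q \<in> cdQ m"
      and e: "cdL m (cdmult m y x) p = cdL m (cdmult m y x) q"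
    obtain p1 p2 where pp: "p = (p1,p2)" "length p2 = m" using p by (cases p) (auto simp: mem_cdQ)
    obtain q1 q2 where qq: "q = (q1,q2)" "length q2 = m" using q by (cases q) (auto simp: mem_cdQ)
    have e2: "t*s*S bs as*p1*S (xl bs as) p2 = t*s*S bs as*q1*S (xl bs as) q2"
      "xl (xl bs as) p2 = xl (xl bs as) q2"
      using e pp qq x y by (auto simp: cdL_def yx mult_eq)
    have l: "length (xl bs as) = m" using x y by simp
    have "p2 = q2" by (metis xl_cancel l pp(2) qq(2) e2(2))
    then show "p = q" using e2(1) pp qq snz S_nz by simp
  qed
  have zm: "cdsc c z \<in> cdQ m" using z cpm by (auto simp: cdsc_def mem_cdQ)
  have key: "cdL m (cdmult m y x) (cdsc c z) = cdmult m y (cdmult m x z)"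
  proof -
    have l: "cdL m (cdmult m y x) (cdsc c z) = (t*s*S bs as*(c*u)*S (xl bs as) cs, xl (xl bs as) cs)"
      using x y z by (simp add: cdL_def yx cdsc_def mult_eq)
    have r: "cdmult m y (cdmult m x z) = (t*(s*u*S as cs)*S bs (xl as cs), xl bs (xl as cs))"
      using x y z by (simp add: mult_eq)
    have "t*s*S bs as*(c*u)*S (xl bs as) cs = t*(s*u*S as cs)*S bs (xl as cs)
       * (S bs as * S bs as) * (S (xl bs as) cs * S (xl bs as) cs)"
      by (simp add: c_def A_def mult_ac)
    also have "\<dots> = t*(s*u*S as cs)*S bs (xl as cs)" by (simp only: S_sq mult_1_right)
    finally show ?thesis unfolding l r by (simp add: xl_assoc)
  qed
  show ?thesis unfolding cdLL_def ac
    using inv_into_f_eq[OF inj zm key] by (simp add: cdL_def)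
qed

lemma A_pm: "A a b c = 1 \<or> A a b c = -1"
proof -
  have "S a b = 1 \<or> S a b = -1" "S (xl a b) c = 1 \<or> S (xl a b) c = -1"
    "S b c = 1 \<or> S b c = -1" "S a (xl b c) = 1 \<or> S a (xl b c) = -1" by (rule S_pm)+
  then show ?thesis unfolding A_def by (elim disjE) (simp_all only: mult_1_right mult_1_left mult_minus1 mult_minus1_right minus_minus, simp_all)
qed

lemma A_sq: "A a b c * A a b c = 1" using A_pm[of a b c] by auto

lemma C_formula: "length u = length v \<Longrightarrow> S u v * S v u = kk u * kk v * kk (xl u v)"
proof (induction u arbitrary: v)
  case Nil then show ?case by (simp add: kk_def)
next
  case (Cons a u)
  then obtain b v' where v: "v = b#v'" "length v' = length u" by (cases v) auto
  have IH: "S u v' * S v' u = kk u * kk v' * kk (xl u v')" using Cons v by simp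
  show ?case
  proof (cases a; cases b)
    assume "a" "b"
    then have "S (a#u) v * S v (a#u) = (kk u * kk v') * (S u v' * S v' u)" using v by (simp add: mult_ac)
    also have "\<dots> = (kk u * kk u) * (kk v' * kk v') * kk (xl u v')" using IH by (simp add: mult_ac)
    also have "\<dots> = kk (xl u v')" by (simp only: kk_sq mult_1_left)
    finally show ?thesis using v \<open>a\<close> \<open>b\<close> by simp
  next
    assume "a" "\<not> b" then show ?thesis using v S_pm[of u v'] kk_pm[of v'] by auto
  next
    assume "\<not> a" "b" then show ?thesis using v S_pm[of v' u] kk_pm[of u] by auto
  next
    assume "\<not> a" "\<not> b" then show ?thesis using v IH by simp
  qed
qed

lemma pairS: "S (\<delta>#d) (True#c) * S (\<delta>#d) (False#c) = (if \<delta> then -1 else 1) * (S d c * S c d)"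
  using S_pm[of c d] S_pm[of d c] kk_pm[of c] by (cases \<delta>) auto

lemma alg3: "(c::int)*c=1 \<Longrightarrow> q*q=1 \<Longrightarrow> r*r=1 \<Longrightarrow> (p*c*q)*(b*c*r)*(a*r*q) = b*a*p"
proof -
  assume h: "c*c=1" "q*q=1" "r*r=1"
  have "(p*c*q)*(b*c*r)*(a*r*q) = b*a*p*(c*c)*(q*q)*(r*r)" by (simp add: mult_ac)
  also have "\<dots> = b*a*p" by (simp only: h mult_1_right)
  finally show ?thesis .
qed

lemma key1:
  assumes "length a = m" "length b = m" "length c = m"
  shows "A (\<beta>#a) (\<alpha>#b) (True#c) = (S b a * S a b) * A (\<beta>#a) (\<alpha>#b) (False#c)"
proof -
  define Y where "Y = \<beta>#a"
  define X where "X = \<alpha>#b"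
  define W1 where "W1 = True#c"
  define W0 where "W0 = False#c"
  have prod: "A Y X W1 * A Y X W0 = (S Y X * S Y X) * (S (xl Y X) W1 * S (xl Y X) W0)
       * (S X W1 * S X W0) * (S Y (xl X W1) * S Y (xl X W0))"
    by (simp add: A_def mult_ac)
  have p1: "S (xl Y X) W1 * S (xl Y X) W0 = (if \<beta> \<noteq> \<alpha> then -1 else 1) * (S (xl a b) c * S c (xl a b))"
    unfolding Y_def X_def W1_def W0_def by (simp only: xl.simps pairS)
  have p2: "S X W1 * S X W0 = (if \<alpha> then -1 else 1) * (S b c * S c b)"
    unfolding X_def W1_def W0_def by (simp only: pairS)
  have p3: "S Y (xl X W1) * S Y (xl X W0) = (if \<beta> then -1 else 1) * (S a (xl b c) * S (xl b c) a)"
    unfolding Y_def X_def W1_def W0_def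
    using pairS[of \<beta> a "xl b c"] by (cases \<alpha>) (simp_all add: mult_ac)
  have c1: "S (xl a b) c * S c (xl a b) = kk (xl a b) * kk c * kk (xl a (xl b c))"
    using C_formula[of "xl a b" c] assms by (simp add: xl_assoc)
  have c2: "S b c * S c b = kk b * kk c * kk (xl b c)" using C_formula[of b c] assms by simp
  have c3: "S a (xl b c) * S (xl b c) a = kk a * kk (xl b c) * kk (xl a (xl b c))"
    using C_formula[of a "xl b c"] assms by simp
  have c4: "S b a * S a b = kk b * kk a * kk (xl a b)"
    using C_formula[of b a] assms by (simp add: xl_comm)
  have sg: "(if \<beta> \<noteq> \<alpha> then -1 else 1) * (if \<alpha> then -1 else 1) * (if \<beta> then -1 else (1::int)) = 1"
    by (cases \<alpha>; cases \<beta>) auto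
  have "A Y X W1 * A Y X W0 = ((if \<beta> \<noteq> \<alpha> then -1 else 1) * (if \<alpha> then -1 else 1) * (if \<beta> then -1 else 1))
     * ((kk (xl a b) * kk c * kk (xl a (xl b c))) * (kk b * kk c * kk (xl b c)) * (kk a * kk (xl b c) * kk (xl a (xl b c))))"
    unfolding prod p1 p2 p3 c1 c2 c3 S_sq by (simp add: mult_ac)
  also have "\<dots> = S b a * S a b" unfolding sg c4 by (simp add: alg3 kk_sq)
  finally have r: "A Y X W1 * A Y X W0 = S b a * S a b" .
  have "A Y X W1 = A Y X W1 * (A Y X W0 * A Y X W0)" by (simp only: A_sq mult_1_right)
  also have "\<dots> = (A Y X W1 * A Y X W0) * A Y X W0" by (simp add: mult_ac)
  also have "\<dots> = (S b a * S a b) * A Y X W0" by (simp only: r)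
  finally show ?thesis unfolding Y_def X_def W1_def W0_def .
qed

lemma Se: "S (True # replicate m False) (\<delta>#d) = (if \<delta> then -1 else 1) * kk d" if "length d = m"
  using that S_zero_l[of d] S_zero_r[of d] by (cases \<delta>) auto

lemma key3:
  assumes "length b = m" "length c = m"
  shows "A (True # replicate m False) (\<alpha>#b) (\<gamma>#c) = A (True # replicate m False) ((\<not>\<alpha>)#b) (\<gamma>#c)"
proof -
  have z: "xl (replicate m False) b = b" using xl_zero_l[of b] assms by simp
  have zz: "S b (replicate m False) = 1" "S (replicate m False) b = 1"
    "S (xl b c) (replicate m False) = 1" "S (replicate m False) (xl b c) = 1"
    using S_zero_l[of b] S_zero_r[of b] S_zero_l[of "xl b c"] S_zero_r[of "xl b c"] assms by auto
  show ?thesis unfolding A_def using assms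
    by (cases \<alpha>; cases \<gamma>) (simp_all add: Se z zz mult_ac)
qed

theorem mainTheorem14:
  fixes n :: nat and xb yb :: cd and xn yn :: bool
  assumes "1 \<le> n"
    and "xb \<in> cdQ (n - 1)" and "yb \<in> cdQ (n - 1)"
  shows "(\<forall>z \<in> cdQ (n - 1).
            cdassoc n (cdpair yb yn) (cdpair xb xn) (cdmult n (cdpair z False) (cdi n))
              = cdcomm (n - 1) xb yb * cdassoc n (cdpair yb yn) (cdpair xb xn) (cdpair z False))
       \<and> (\<forall>z \<in> cdQ (n - 1). \<forall>\<epsilon>::int. (\<epsilon> = 1 \<or> \<epsilon> = -1) \<longrightarrow>
            cdLL n (cdpair xb xn) (cdpair yb yn) (cdpair z False) = cdsc \<epsilon> (cdpair z False) \<longrightarrow>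
            cdLL n (cdpair xb xn) (cdpair yb yn) (cdmult n (cdpair z False) (cdi n))
              = cdsc (cdcomm (n - 1) xb yb * \<epsilon>) (cdmult n (cdpair z False) (cdi n)))
       \<and> (\<forall>x \<in> cdQ n. \<forall>z \<in> cdQ n.
            cdLL n x (cdi n) z = cdLL n (cdmult n x (cdi n)) (cdi n) z)"
proof -
  obtain m where n: "n = Suc m" using assms(1) by (cases n) auto
  have nm: "n - 1 = m" using n by simp
  obtain s as where x: "xb = (s,as)" "s = 1 \<or> s = -1" "length as = m" using assms(2) nm
    by (cases xb) (auto simp: mem_cdQ)
  obtain t bs where y: "yb = (t,bs)" "t = 1 \<or> t = -1" "length bs = m" using assms(3) nm
    by (cases yb) (auto simp: mem_cdQ)
  have snz: "s \<noteq> 0" "t \<noteq> 0" using x y by auto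
  have e: "cdi n = (1, True # replicate m False)" using n by (simp add: cdi_def cdpair_def cdone_def)
  have pr: "\<And>u v a. cdpair (u,v) a = (u, a#v)" by (simp add: cdpair_def)
  have ze: "\<And>u cs. length cs = m \<Longrightarrow> cdmult n (u, False#cs) (1, True # replicate m False) = (u, True#cs)"
  proof -
    fix u :: int and cs :: "bool list" assume l: "length cs = m"
    have "cdmult n (u, False#cs) (1, True # replicate m False)
        = (u * 1 * S (False#cs) (True # replicate m False), xl (False#cs) (True # replicate m False))"
      by (rule mult_eq) (use l n in auto)
    also have "\<dots> = (u, True#cs)" using S_zero_l[of cs] xl_zero_r[of cs] l by simp
    finally show "cdmult n (u, False#cs) (1, True # replicate m False) = (u, True#cs)" .
  qed
  have comm: "cdcomm (n - 1) (s,as) (t,bs) = S as bs * S bs as" using x y snz nm by (simp add: comm_eq)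
  have P1: "\<And>u cs. (u = 1 \<or> u = -1) \<Longrightarrow> length cs = m \<Longrightarrow>
     cdassoc n (t, yn#bs) (s, xn#as) (u, True#cs) = (S as bs * S bs as) * cdassoc n (t, yn#bs) (s, xn#as) (u, False#cs)"
  proof -
    fix u :: int and cs :: "bool list" assume u: "u = 1 \<or> u = -1" and l: "length cs = m"
    have "cdassoc n (t, yn#bs) (s, xn#as) (u, True#cs) = A (yn#bs) (xn#as) (True#cs)"
      using x y u l snz n by (intro assoc_eq) auto
    moreover have "cdassoc n (t, yn#bs) (s, xn#as) (u, False#cs) = A (yn#bs) (xn#as) (False#cs)"
      using x y u l snz n by (intro assoc_eq) auto
    ultimately show "cdassoc n (t, yn#bs) (s, xn#as) (u, True#cs) = (S as bs * S bs as) * cdassoc n (t, yn#bs) (s, xn#as) (u, False#cs)"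
      using key1[of bs m as cs yn xn] x y l by simp
  qed
  have part1: "\<forall>z \<in> cdQ (n - 1).
            cdassoc n (cdpair yb yn) (cdpair xb xn) (cdmult n (cdpair z False) (cdi n))
              = cdcomm (n - 1) xb yb * cdassoc n (cdpair yb yn) (cdpair xb xn) (cdpair z False)"
  proof
    fix z assume "z \<in> cdQ (n - 1)"
    then obtain u cs where z: "z = (u,cs)" "u = 1 \<or> u = -1" "length cs = m" using nm
      by (cases z) (auto simp: mem_cdQ)
    show "cdassoc n (cdpair yb yn) (cdpair xb xn) (cdmult n (cdpair z False) (cdi n))
              = cdcomm (n - 1) xb yb * cdassoc n (cdpair yb yn) (cdpair xb xn) (cdpair z False)"
      unfolding x(1) y(1) z(1) comm pr e ze[OF z(3)] using P1[OF z(2,3)] .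
  qed
  have XQ: "(s, xn#as) \<in> cdQ n" "(t, yn#bs) \<in> cdQ n" using x y n by (auto simp: mem_cdQ)
  have part2: "\<forall>z \<in> cdQ (n - 1). \<forall>\<epsilon>::int. (\<epsilon> = 1 \<or> \<epsilon> = -1) \<longrightarrow>
            cdLL n (cdpair xb xn) (cdpair yb yn) (cdpair z False) = cdsc \<epsilon> (cdpair z False) \<longrightarrow>
            cdLL n (cdpair xb xn) (cdpair yb yn) (cdmult n (cdpair z False) (cdi n))
              = cdsc (cdcomm (n - 1) xb yb * \<epsilon>) (cdmult n (cdpair z False) (cdi n))"
  proof (intro ballI allI impI)
    fix z and \<epsilon>::int assume "z \<in> cdQ (n - 1)" and "\<epsilon> = 1 \<or> \<epsilon> = -1"
      and H: "cdLL n (cdpair xb xn) (cdpair yb yn) (cdpair z False) = cdsc \<epsilon> (cdpair z False)"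
    then obtain u cs where z: "z = (u,cs)" "u = 1 \<or> u = -1" "length cs = m" using nm
      by (cases z) (auto simp: mem_cdQ)
    have Z0: "(u, False#cs) \<in> cdQ n" "(u, True#cs) \<in> cdQ n" using z n by (auto simp: mem_cdQ)
    have "cdsc (cdassoc n (t, yn#bs) (s, xn#as) (u, False#cs)) (u, False#cs) = cdsc \<epsilon> (u, False#cs)"
      using H LL_eq[OF XQ(1) XQ(2) Z0(1)] unfolding x(1) y(1) z(1) pr by simp
    then have "cdassoc n (t, yn#bs) (s, xn#as) (u, False#cs) * u = \<epsilon> * u" by (simp add: cdsc_def)
    then have a0: "cdassoc n (t, yn#bs) (s, xn#as) (u, False#cs) = \<epsilon>" using z by auto
    show "cdLL n (cdpair xb xn) (cdpair yb yn) (cdmult n (cdpair z False) (cdi n))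
              = cdsc (cdcomm (n - 1) xb yb * \<epsilon>) (cdmult n (cdpair z False) (cdi n))"
      unfolding x(1) y(1) z(1) comm pr e ze[OF z(3)] LL_eq[OF XQ(1) XQ(2) Z0(2)] P1[OF z(2,3)] a0 ..
  qed
  have part3: "\<forall>x \<in> cdQ n. \<forall>z \<in> cdQ n. cdLL n x (cdi n) z = cdLL n (cdmult n x (cdi n)) (cdi n) z"
  proof (intro ballI)
    fix x z assume xQ: "x \<in> cdQ n" and zQ: "z \<in> cdQ n"
    obtain s' xs where xx: "x = (s', xs)" "s' = 1 \<or> s' = -1" "length xs = n" using xQ
      by (cases x) (auto simp: mem_cdQ)
    obtain \<alpha> b where xs: "xs = \<alpha>#b" "length b = m" using xx(3) n by (cases xs) auto
    obtain u zs where zz: "z = (u, zs)" "u = 1 \<or> u = -1" "length zs = n" using zQ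
      by (cases z) (auto simp: mem_cdQ)
    obtain \<gamma> c where zs: "zs = \<gamma>#c" "length c = m" using zz(3) n by (cases zs) auto
    have eQ: "cdi n \<in> cdQ n" using e n by (simp add: mem_cdQ)
    have xe: "cdmult n x (cdi n) = (s' * S (\<alpha>#b) (True # replicate m False), (\<not>\<alpha>)#b)"
    proof -
      have "cdmult n (s', \<alpha>#b) (1, True # replicate m False)
          = (s'*1*S (\<alpha>#b) (True # replicate m False), xl (\<alpha>#b) (True # replicate m False))"
        by (rule mult_eq) (use xs n in auto)
      then show ?thesis unfolding e xx(1) xs(1) using xs(2) xl_zero_r[of b] by simp
    qed
    have xeQ: "cdmult n x (cdi n) \<in> cdQ n" unfolding xe using xx(2) S_pm[of "\<alpha>#b" "True # replicate m False"] xs n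
      by (auto simp: mem_cdQ)
    have a1: "cdassoc n (cdi n) x z = A (True # replicate m False) (\<alpha>#b) (\<gamma>#c)"
      unfolding e xx(1) xs(1) zz(1) zs(1) by (rule assoc_eq) (use xx xs zz zs n in auto)
    have a2: "cdassoc n (cdi n) (cdmult n x (cdi n)) z = A (True # replicate m False) ((\<not>\<alpha>)#b) (\<gamma>#c)"
      unfolding e[symmetric] xe unfolding e zz(1) zs(1) by (rule assoc_eq) (use xx xs zz zs n S_nz in auto)
    have "cdLL n x (cdi n) z = cdsc (A (True # replicate m False) (\<alpha>#b) (\<gamma>#c)) z"
      using LL_eq[OF xQ eQ zQ] a1 by simp
    moreover have "cdLL n (cdmult n x (cdi n)) (cdi n) z = cdsc (A (True # replicate m False) ((\<not>\<alpha>)#b) (\<gamma>#c)) z"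
      using LL_eq[OF xeQ eQ zQ] a2 by simp
    ultimately show "cdLL n x (cdi n) z = cdLL n (cdmult n x (cdi n)) (cdi n) z"
      using key3[OF xs(2) zs(2)] by simp
  qed
  show ?thesis using part1 part2 part3 by blast
qed

end
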